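(* There is a natural transformation $\iota\colon M\otimes-\to N\otimes-$ of endofunctors of $\mathsf{SquaMS}$ whose component $\iota_X\colon M\otimes X\to N\otimes X$ is the inclusion $m\otimes x\mapsto m\otimes x$.
   Context: Let $M_0=\{(r,s)\in[0,1]^2: r\in\{0,1\}\text{ or } s\in\{0,1\}\}$. A square metric space is a pair $(X,S_X)$ with $X$ a metric space with all distances at most $2$ and $S_X\colon M_0\to X$ injective such that (sq1) for $i\in\{0,1\}$, $r,s\in[0,1]$: $d_X(S_X(i,r),S_X(i,s))=|s-r|$ and $d_X(S_X(r,i),S_X(s,i))=|s-r|$; (sq2) $d_X(S_X(r,s),S_X(t,u))\ge|r-t|+|s-u|$. $\mathsf{SquaMS}$: these objects, with short maps $f$ satisfying $f\circ S_X=S_Y$ as morphisms. Let $N=\{0,1,2\}^2$, $M=N\setminus\{(1,1)\}$, also viewed as points of $\mathbb{R}^2$. For $P\in\{M,N\}$ and $X$ in $\mathsf{SquaMS}$, $P\otimes X=(P\times X)/\!\sim$, where $\sim$ is generated by $(m,S_X(p))\sim(n,S_X(q))$ whenever $m,n\in P$ differ by exactly $1$ in exactly one coordinate and $(m+p)/3=(n+q)/3$; $m\otimes x$ is the class of $(m,x)$; the metric is the quotient of $d((a,u),(b,v))=\frac13 d_X(u,v)$ if $a=b$, $2$ otherwise (infimum over finite chains, $\sim$-related consecutive pairs counting $0$); $S_{P\otimes X}(p)=m\otimes S_X(3p-m)$ for any $m\in P$ with $p\in(m+[0,1]^2)/3$; $(P\otimes f)(m\otimes x)=m\otimes f(x)$.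 *)

theory Defs
  imports "HOL-Analysis.Analysis"
begin

record 'a sqms =
  sq_carrier :: "'a set"
  sq_dist :: "'a \<Rightarrow> 'a \<Rightarrow> real"
  sq_map :: "real \<times> real \<Rightarrow> 'a"

definition M0 :: "(real \<times> real) set" where
  "M0 = {(r, s). r \<in> {0..1} \<and> s \<in> {0..1} \<and> (r \<in> {0, 1} \<or> s \<in> {0, 1})}"

definition is_sqms :: "('a, 'z) sqms_scheme \<Rightarrow> bool" where
  "is_sqms X \<longleftrightarrow>
     Metric_space (sq_carrier X) (sq_dist X)
   \<and> (\<forall>x\<in>sq_carrier X. \<forall>y\<in>sq_carrier X. sq_dist X x y \<le> 2)
   \<and> sq_map X ` M0 \<subseteq> sq_carrier X
   \<and> inj_on (sq_map X) M0
   \<and> (\<forall>i\<in>{0, 1::real}. \<forall>r\<in>{0..1}. \<forall>s\<in>{0..1}.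
        sq_dist X (sq_map X (i, r)) (sq_map X (i, s)) = \<bar>s - r\<bar>
      \<and> sq_dist X (sq_map X (r, i)) (sq_map X (s, i)) = \<bar>s - r\<bar>)
   \<and> (\<forall>r s t u. (r, s) \<in> M0 \<longrightarrow> (t, u) \<in> M0 \<longrightarrow>
        sq_dist X (sq_map X (r, s)) (sq_map X (t, u)) \<ge> \<bar>r - t\<bar> + \<bar>s - u\<bar>)"

definition sqms_mor :: "('a, 'z) sqms_scheme \<Rightarrow> ('b, 'w) sqms_scheme \<Rightarrow> ('a \<Rightarrow> 'b) \<Rightarrow> bool" where
  "sqms_mor X Y f \<longleftrightarrow>
     f ` sq_carrier X \<subseteq> sq_carrier Y
   \<and> (\<forall>x\<in>sq_carrier X. \<forall>y\<in>sq_carrier X. sq_dist Y (f x) (f y) \<le> sq_dist X x y)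
   \<and> (\<forall>p\<in>M0. f (sq_map X p) = sq_map Y p)"

definition Ngrid :: "(int \<times> int) set" where
  "Ngrid = {0, 1, 2} \<times> {0, 1, 2}"

definition Mgrid :: "(int \<times> int) set" where
  "Mgrid = Ngrid - {(1, 1)}"

definition adj :: "int \<times> int \<Rightarrow> int \<times> int \<Rightarrow> bool" where
  "adj m n \<longleftrightarrow> (\<bar>fst m - fst n\<bar> = 1 \<and> snd m = snd n) \<or> (fst m = fst n \<and> \<bar>snd m - snd n\<bar> = 1)"

definition glue_gen :: "(int \<times> int) set \<Rightarrow> 'a sqms \<Rightarrow> (((int \<times> int) \<times> 'a) \<times> ((int \<times> int) \<times> 'a)) set" where
  "glue_gen P X = {((m, sq_map X p), (n, sq_map X q)) | m n p q.
      m \<in> P \<and> n \<in> P \<and> adj m n \<and> p \<in> M0 \<and> q \<in> M0 \<and>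
      (of_int (fst m) + fst p) / 3 = (of_int (fst n) + fst q) / 3 \<and>
      (of_int (snd m) + snd p) / 3 = (of_int (snd n) + snd q) / 3}"

definition tens_rel :: "(int \<times> int) set \<Rightarrow> 'a sqms \<Rightarrow> (((int \<times> int) \<times> 'a) \<times> ((int \<times> int) \<times> 'a)) set" where
  "tens_rel P X = (glue_gen P X \<union> (glue_gen P X)\<inverse>)\<^sup>* \<inter> ((P \<times> sq_carrier X) \<times> (P \<times> sq_carrier X))"

definition tclass :: "(int \<times> int) set \<Rightarrow> 'a sqms \<Rightarrow> (int \<times> int) \<times> 'a \<Rightarrow> ((int \<times> int) \<times> 'a) set" where
  "tclass P X a = tens_rel P X `` {a}"

definition tbase :: "'a sqms \<Rightarrow> (int \<times> int) \<times> 'a \<Rightarrow> (int \<times> int) \<times> 'a \<Rightarrow> real" where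
  "tbase X a b = (if fst a = fst b then sq_dist X (snd a) (snd b) / 3 else 2)"

definition chain_cost :: "(int \<times> int) set \<Rightarrow> 'a sqms \<Rightarrow> ((int \<times> int) \<times> 'a) list \<Rightarrow> real" where
  "chain_cost P X xs = sum_list (map (\<lambda>(a, b). if (a, b) \<in> tens_rel P X then 0 else tbase X a b) (zip xs (tl xs)))"

definition tdist :: "(int \<times> int) set \<Rightarrow> 'a sqms \<Rightarrow> ((int \<times> int) \<times> 'a) set \<Rightarrow> ((int \<times> int) \<times> 'a) set \<Rightarrow> real" where
  "tdist P X c1 c2 = Inf {chain_cost P X xs | xs. xs \<noteq> [] \<and> set xs \<subseteq> P \<times> sq_carrier X \<and> hd xs \<in> c1 \<and> last xs \<in> c2}"

definition in_cell :: "int \<times> int \<Rightarrow> real \<times> real \<Rightarrow> bool" where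
  "in_cell m p \<longleftrightarrow> 3 * fst p - of_int (fst m) \<in> {0..1} \<and> 3 * snd p - of_int (snd m) \<in> {0..1}"

definition tS :: "(int \<times> int) set \<Rightarrow> 'a sqms \<Rightarrow> real \<times> real \<Rightarrow> ((int \<times> int) \<times> 'a) set" where
  "tS P X p = (SOME c. \<exists>m\<in>P. in_cell m p \<and>
      c = tclass P X (m, sq_map X (3 * fst p - of_int (fst m), 3 * snd p - of_int (snd m))))"

definition tensor :: "(int \<times> int) set \<Rightarrow> 'a sqms \<Rightarrow> ((int \<times> int) \<times> 'a) set sqms" where
  "tensor P X = \<lparr> sq_carrier = (P \<times> sq_carrier X) // tens_rel P X,
                  sq_dist = tdist P X, sq_map = tS P X \<rparr>"

definition tmap :: "(int \<times> int) set \<Rightarrow> 'a sqms \<Rightarrow> 'b sqms \<Rightarrow> ('a \<Rightarrow> 'b) \<Rightarrow>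
    ((int \<times> int) \<times> 'a) set \<Rightarrow> ((int \<times> int) \<times> 'b) set" where
  "tmap P X Y f c = (let a = (SOME a. a \<in> c) in tclass P Y (fst a, f (snd a)))"

definition iota :: "'a sqms \<Rightarrow> ((int \<times> int) \<times> 'a) set \<Rightarrow> ((int \<times> int) \<times> 'a) set" where
  "iota X c = tclass Ngrid X (SOME a. a \<in> c)"

end

theory Submission
  imports Defs
begin

lemma glue_sub:
  assumes "is_sqms X"
  shows "glue_gen P X \<subseteq> (P \<times> sq_carrier X) \<times> (P \<times> sq_carrier X)"
  using assms unfolding glue_gen_def is_sqms_def by blast

lemma map_in: "is_sqms X \<Longrightarrow> p \<in> M0 \<Longrightarrow> sq_map X p \<in> sq_carrier X"
  unfolding is_sqms_def by blast

lemma tens_rel_refl: "a \<in> P \<times> sq_carrier X \<Longrightarrow> (a, a) \<in> tens_rel P X"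
  by (auto simp: tens_rel_def)

lemma tens_rel_sym: "(a, b) \<in> tens_rel P X \<Longrightarrow> (b, a) \<in> tens_rel P X"
proof -
  assume h: "(a, b) \<in> tens_rel P X"
  let ?G = "glue_gen P X \<union> (glue_gen P X)\<inverse>"
  have "sym ?G" by (simp add: sym_Un_converse)
  then have "sym (?G\<^sup>*)" by (rule sym_rtrancl)
  with h show ?thesis unfolding tens_rel_def by (auto dest: symD)
qed

lemma tens_rel_trans: "(a, b) \<in> tens_rel P X \<Longrightarrow> (b, c) \<in> tens_rel P X \<Longrightarrow> (a, c) \<in> tens_rel P X"
  unfolding tens_rel_def by auto

lemma tclass_eq: "(a, b) \<in> tens_rel P X \<Longrightarrow> tclass P X a = tclass P X b"
  unfolding tclass_def by (auto intro: tens_rel_trans tens_rel_sym)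

lemma tclass_mem: "a \<in> P \<times> sq_carrier X \<Longrightarrow> a \<in> tclass P X a"
  unfolding tclass_def by (auto intro: tens_rel_refl)

lemma some_in_class:
  assumes "a \<in> P \<times> sq_carrier X"
  shows "(a, SOME b. b \<in> tclass P X a) \<in> tens_rel P X"
proof -
  have "(SOME b. b \<in> tclass P X a) \<in> tclass P X a"
    using tclass_mem[OF assms] by (rule someI)
  then show ?thesis unfolding tclass_def by auto
qed

lemma glue_mono: "P \<subseteq> Q \<Longrightarrow> glue_gen P X \<subseteq> glue_gen Q X"
  unfolding glue_gen_def by blast

lemma tens_rel_mono:
  assumes "P \<subseteq> Q" shows "tens_rel P X \<subseteq> tens_rel Q X"
proof -
  have "glue_gen P X \<union> (glue_gen P X)\<inverse> \<subseteq> glue_gen Q X \<union> (glue_gen Q X)\<inverse>"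
    using glue_mono[OF assms] by blast
  then have "(glue_gen P X \<union> (glue_gen P X)\<inverse>)\<^sup>* \<subseteq> (glue_gen Q X \<union> (glue_gen Q X)\<inverse>)\<^sup>*"
    by (rule rtrancl_mono)
  then show ?thesis unfolding tens_rel_def using assms by blast
qed

lemma tens_rel_map:
  assumes X: "is_sqms X" and Y: "is_sqms Y" and f: "sqms_mor X Y f"
    and h: "(a, b) \<in> tens_rel P X"
  shows "((fst a, f (snd a)), (fst b, f (snd b))) \<in> tens_rel P Y"
proof -
  define g where "g = (\<lambda>z::(int\<times>int)\<times>'a. (fst z, f (snd z)))"
  let ?G = "glue_gen P X \<union> (glue_gen P X)\<inverse>"
  let ?H = "glue_gen P Y \<union> (glue_gen P Y)\<inverse>"
  have gg: "(g u, g v) \<in> glue_gen P Y" if "(u, v) \<in> glue_gen P X" for u v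
  proof -
    from that obtain m n p q where e: "u = (m, sq_map X p)" "v = (n, sq_map X q)"
      and c: "m \<in> P" "n \<in> P" "adj m n" "p \<in> M0" "q \<in> M0"
        "(of_int (fst m) + fst p) / 3 = (of_int (fst n) + fst q) / 3"
        "(of_int (snd m) + snd p) / 3 = (of_int (snd n) + snd q) / 3"
      unfolding glue_gen_def by blast
    have "f (sq_map X p) = sq_map Y p" "f (sq_map X q) = sq_map Y q"
      using f c unfolding sqms_mor_def by auto
    moreover have "((m, sq_map Y p), (n, sq_map Y q)) \<in> glue_gen P Y"
      unfolding glue_gen_def using c by blast
    ultimately show ?thesis using e unfolding g_def by simp
  qed
  have step: "(g u, g v) \<in> ?H" if "(u, v) \<in> ?G" for u v
    using that gg by blast
  have "(a, b) \<in> ?G\<^sup>*" using h unfolding tens_rel_def by blast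
  then have "(g a, g b) \<in> ?H\<^sup>*"
  proof (induction rule: rtrancl_induct)
    case base then show ?case by simp
  next
    case (step y z)
    then show ?case using step(2)[THEN \<open>\<And>u v. (u, v) \<in> ?G \<Longrightarrow> (g u, g v) \<in> ?H\<close>]
      by (meson rtrancl.rtrancl_into_rtrancl)
  qed
  moreover have "g a \<in> P \<times> sq_carrier Y" "g b \<in> P \<times> sq_carrier Y"
    using h f unfolding tens_rel_def sqms_mor_def g_def by auto
  ultimately show ?thesis unfolding tens_rel_def g_def by auto
qed

lemma int_bound:
  fixes i :: int and r :: real
  assumes "r - of_int i \<in> {0..1}" "r - of_int j \<in> {0..1}"
  shows "\<bar>i - j\<bar> \<le> 1"
proof -
  have "of_int i - of_int j \<le> (1::real)" "of_int j - of_int i \<le> (1::real)" using assms by auto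
  then have "i - j \<le> 1" "j - i \<le> 1" by linarith+
  then show ?thesis by linarith
qed

lemma int_coord:
  fixes i :: int and r :: real
  assumes "r \<in> {0, 1}" "3 * r - of_int i \<in> {0..1}" "i \<in> {0,1,2}"
  shows "(r = 0 \<and> i = 0) \<or> (r = 1 \<and> i = 2)"
  using assms by auto

lemma cell_facts:
  assumes p: "p \<in> M0" and m: "m \<in> Ngrid" and c: "in_cell m p"
  shows "m \<in> Mgrid" "(3 * fst p - of_int (fst m), 3 * snd p - of_int (snd m)) \<in> M0"
proof -
  obtain r s where ps: "p = (r, s)" by force
  obtain i j where ms: "m = (i, j)" by force
  have r: "r \<in> {0..1}" "s \<in> {0..1}" "r \<in> {0,1} \<or> s \<in> {0,1}" using p ps unfolding M0_def by auto
  have ij: "i \<in> {0,1,2}" "j \<in> {0,1,2}" using m ms unfolding Ngrid_def by auto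
  have ci: "3 * r - of_int i \<in> {0..1}" "3 * s - of_int j \<in> {0..1}" using c ps ms unfolding in_cell_def by auto
  show "m \<in> Mgrid"
  proof -
    have "\<not> (i = 1 \<and> j = 1)"
    proof
      assume "i = 1 \<and> j = 1"
      then show False using r ci by auto
    qed
    then show ?thesis using m ms unfolding Mgrid_def by auto
  qed
  show "(3 * fst p - of_int (fst m), 3 * snd p - of_int (snd m)) \<in> M0"
    using r ci ij int_coord[of r i] int_coord[of s j] unfolding M0_def ps ms by auto
qed

lemma cell_adj:
  assumes p: "p \<in> M0" and m: "m \<in> Ngrid" and n: "n \<in> Ngrid"
    and cm: "in_cell m p" and cn: "in_cell n p" and ne: "m \<noteq> n"
  shows "adj m n"
proof -
  obtain r s where ps: "p = (r, s)" by force
  obtain i j where ms: "m = (i, j)" by force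
  obtain i' j' where ns: "n = (i', j')" by force
  have r: "r \<in> {0..1}" "s \<in> {0..1}" "r \<in> {0,1} \<or> s \<in> {0,1}" using p ps unfolding M0_def by auto
  have ij: "i \<in> {0,1,2}" "j \<in> {0,1,2}" "i' \<in> {0,1,2}" "j' \<in> {0,1,2}"
    using m ms n ns unfolding Ngrid_def by auto
  have ci: "3 * r - of_int i \<in> {0..1}" "3 * s - of_int j \<in> {0..1}"
    "3 * r - of_int i' \<in> {0..1}" "3 * s - of_int j' \<in> {0..1}"
    using cm cn ps ms ns unfolding in_cell_def by auto
  have b: "\<bar>i - i'\<bar> \<le> 1" "\<bar>j - j'\<bar> \<le> 1"
    using int_bound[OF ci(1) ci(3)] int_bound[OF ci(2) ci(4)] by auto
  have "i = i' \<or> j = j'"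
    using r ci ij int_coord[of r i] int_coord[of s j] int_coord[of r i'] int_coord[of s j'] by auto
  then show ?thesis using b ne ms ns unfolding adj_def by auto
qed

lemma cell_ex:
  assumes p: "p \<in> M0" shows "\<exists>m\<in>Ngrid. in_cell m p"
proof -
  obtain r s where ps: "p = (r, s)" by force
  have r: "r \<in> {0..1}" "s \<in> {0..1}" using p ps unfolding M0_def by auto
  have one: "min 2 (floor (3 * t)) \<in> {0,1,2} \<and> 3 * t - of_int (min 2 (floor (3 * t))) \<in> {0..1}"
    if "t \<in> {0..1}" for t :: real
  proof -
    have a: "0 \<le> floor (3 * t)" "floor (3 * t) \<le> 3" using that by auto
    have b: "of_int (floor (3*t)) \<le> 3 * t" "3 * t < of_int (floor (3*t)) + 1" by linarith+
    show ?thesis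
    proof (cases "floor (3 * t) \<le> 2")
      case True
      then have "min 2 (floor (3 * t)) = floor (3 * t)" by simp
      moreover have "floor (3 * t) = 0 \<or> floor (3 * t) = 1 \<or> floor (3 * t) = 2" using a True by linarith
      moreover have "3 * t - of_int (floor (3 * t)) \<in> {0..1}" using b unfolding atLeastAtMost_iff by linarith
      ultimately show ?thesis by auto
    next
      case False
      then have "min 2 (floor (3 * t)) = 2" by simp
      moreover have "3 * t - 2 \<in> {0..1}" using False b that unfolding atLeastAtMost_iff by linarith
      ultimately show ?thesis by simp
    qed
  qed
  show ?thesis
    using one[OF r(1)] one[OF r(2)] unfolding ps Ngrid_def in_cell_def
    by (intro bexI[of _ "(min 2 (floor (3 * r)), min 2 (floor (3 * s)))"]) auto
qed

lemma glue_intro: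
  assumes "m \<in> P" "n \<in> P" "adj m n" "p \<in> M0" "q \<in> M0"
    "(of_int (fst m) + fst p) / 3 = (of_int (fst n) + fst q) / 3"
    "(of_int (snd m) + snd p) / 3 = (of_int (snd n) + snd q) / 3"
  shows "((m, sq_map X p), (n, sq_map X q)) \<in> glue_gen P X"
  unfolding glue_gen_def using assms by blast

lemma tS_char:
  assumes X: "is_sqms X" and P: "P \<subseteq> Ngrid" and p: "p \<in> M0" and m: "m \<in> P" and cm: "in_cell m p"
  shows "tS P X p = tclass P X (m, sq_map X (3 * fst p - of_int (fst m), 3 * snd p - of_int (snd m)))"
proof -
  define Q where "Q = (\<lambda>n::int\<times>int. (3 * fst p - of_int (fst n), 3 * snd p - of_int (snd n)))"
  have wd: "tclass P X (n, sq_map X (Q n)) = tclass P X (m, sq_map X (Q m))"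
    if n: "n \<in> P" "in_cell n p" for n
  proof (cases "n = m")
    case True then show ?thesis by simp
  next
    case False
    have a: "adj m n" using cell_adj[OF p _ _ cm n(2)] m n P False by auto
    have q: "Q m \<in> M0" "Q n \<in> M0" using cell_facts(2)[OF p] m n cm P unfolding Q_def by auto
    have g: "((m, sq_map X (Q m)), (n, sq_map X (Q n))) \<in> glue_gen P X"
      using m n a q by (intro glue_intro) (auto simp: Q_def)
    then have "((m, sq_map X (Q m)), (n, sq_map X (Q n))) \<in> tens_rel P X"
      using glue_sub[OF X, of P] unfolding tens_rel_def by blast
    then show ?thesis using tclass_eq by metis
  qed
  have ex: "\<exists>c. \<exists>n\<in>P. in_cell n p \<and> c = tclass P X (n, sq_map X (Q n))"
    using m cm by blast
  have eq: "tS P X p = (SOME c. \<exists>n\<in>P. in_cell n p \<and> c = tclass P X (n, sq_map X (Q n)))"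
    unfolding tS_def Q_def by simp
  have "\<exists>n\<in>P. in_cell n p \<and> tS P X p = tclass P X (n, sq_map X (Q n))"
    unfolding eq by (rule someI_ex[OF ex])
  then show ?thesis using wd unfolding Q_def by metis
qed

lemma Mgrid_sub: "Mgrid \<subseteq> Ngrid" unfolding Mgrid_def by auto

lemma iota_class:
  assumes "m \<in> Mgrid" "x \<in> sq_carrier X"
  shows "iota X (tclass Mgrid X (m, x)) = tclass Ngrid X (m, x)"
proof -
  have "((m, x), SOME b. b \<in> tclass Mgrid X (m, x)) \<in> tens_rel Mgrid X"
    using assms by (intro some_in_class) auto
  then have "((m, x), SOME b. b \<in> tclass Mgrid X (m, x)) \<in> tens_rel Ngrid X"
    using tens_rel_mono[OF Mgrid_sub] by blast
  then show ?thesis unfolding iota_def using tclass_eq by metis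
qed

lemma iota_class':
  assumes "a \<in> Mgrid \<times> sq_carrier X"
  shows "iota X (tclass Mgrid X a) = tclass Ngrid X a"
proof -
  obtain m x where a: "a = (m, x)" by (cases a) blast
  show ?thesis unfolding a by (rule iota_class) (use assms a in auto)
qed

lemma carrier_tensor:
  assumes "c \<in> sq_carrier (tensor P X)"
  obtains a where "a \<in> P \<times> sq_carrier X" "c = tclass P X a"
  using assms unfolding tensor_def tclass_def by (auto elim: quotientE)

lemma tmap_class:
  assumes X: "is_sqms X" and Y: "is_sqms Y" and f: "sqms_mor X Y f"
    and a: "a \<in> P \<times> sq_carrier X"
  shows "tmap P X Y f (tclass P X a) = tclass P Y (fst a, f (snd a))"
proof -
  have "(a, SOME b. b \<in> tclass P X a) \<in> tens_rel P X" using a by (rule some_in_class)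
  from tens_rel_map[OF X Y f this] show ?thesis
    unfolding tmap_def Let_def using tclass_eq by metis
qed

lemma chain_cost_nonneg:
  assumes X: "is_sqms X" and xs: "set xs \<subseteq> P \<times> sq_carrier X"
  shows "0 \<le> chain_cost P X xs"
  unfolding chain_cost_def
proof (rule sum_list_nonneg)
  fix t assume "t \<in> set (map (\<lambda>(a, b). if (a, b) \<in> tens_rel P X then 0 else tbase X a b) (zip xs (tl xs)))"
  then obtain a b where ab: "(a, b) \<in> set (zip xs (tl xs))"
    and t: "t = (if (a, b) \<in> tens_rel P X then 0 else tbase X a b)" by auto
  have "a \<in> set xs" "b \<in> set xs" using ab set_zip_leftD set_zip_rightD list.set_sel(2)
    by (metis in_set_zipE list.sel(2) list.set_sel(2))+
  then have "snd a \<in> sq_carrier X" "snd b \<in> sq_carrier X" using xs by auto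
  then have "0 \<le> sq_dist X (snd a) (snd b)"
    using X unfolding is_sqms_def by (auto intro: Metric_space.nonneg)
  then show "0 \<le> t" unfolding t tbase_def by auto
qed

lemma chain_cost_mono:
  assumes X: "is_sqms X" and xs: "set xs \<subseteq> Mgrid \<times> sq_carrier X"
  shows "chain_cost Ngrid X xs \<le> chain_cost Mgrid X xs"
  unfolding chain_cost_def
proof (rule sum_list_mono)
  fix z :: "((int \<times> int) \<times> 'a) \<times> ((int \<times> int) \<times> 'a)"
  assume z: "z \<in> set (zip xs (tl xs))"
  obtain a b where ab: "z = (a, b)" by (cases z) blast
  have "a \<in> set xs" "b \<in> set xs" using z ab
    by (metis in_set_zipE list.sel(2) list.set_sel(2))+
  then have "snd a \<in> sq_carrier X" "snd b \<in> sq_carrier X" using xs by auto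
  then have "0 \<le> sq_dist X (snd a) (snd b)"
    using X unfolding is_sqms_def by (auto intro: Metric_space.nonneg)
  then have "0 \<le> tbase X a b" unfolding tbase_def by auto
  then show "(case z of (a, b) \<Rightarrow> if (a, b) \<in> tens_rel Ngrid X then 0 else tbase X a b)
     \<le> (case z of (a, b) \<Rightarrow> if (a, b) \<in> tens_rel Mgrid X then 0 else tbase X a b)"
    using tens_rel_mono[OF Mgrid_sub, of X] ab by auto
qed

lemma short:
  assumes X: "is_sqms X" and a1: "a1 \<in> Mgrid \<times> sq_carrier X" and a2: "a2 \<in> Mgrid \<times> sq_carrier X"
  shows "tdist Ngrid X (tclass Ngrid X a1) (tclass Ngrid X a2) \<le> tdist Mgrid X (tclass Mgrid X a1) (tclass Mgrid X a2)"
  unfolding tdist_def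
proof (rule cInf_mono)
  show "{chain_cost Mgrid X xs |xs. xs \<noteq> [] \<and> set xs \<subseteq> Mgrid \<times> sq_carrier X \<and>
      hd xs \<in> tclass Mgrid X a1 \<and> last xs \<in> tclass Mgrid X a2} \<noteq> {}"
    using a1 a2 tclass_mem[OF a1] tclass_mem[OF a2]
    by (auto intro!: exI[of _ "[a1, a2]"])
  show "bdd_below {chain_cost Ngrid X xs |xs. xs \<noteq> [] \<and> set xs \<subseteq> Ngrid \<times> sq_carrier X \<and>
      hd xs \<in> tclass Ngrid X a1 \<and> last xs \<in> tclass Ngrid X a2}"
    by (rule bdd_belowI[of _ 0]) (auto intro: chain_cost_nonneg[OF X])
  fix b assume "b \<in> {chain_cost Mgrid X xs |xs. xs \<noteq> [] \<and> set xs \<subseteq> Mgrid \<times> sq_carrier X \<and>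
      hd xs \<in> tclass Mgrid X a1 \<and> last xs \<in> tclass Mgrid X a2}"
  then obtain xs where b: "b = chain_cost Mgrid X xs" and h: "xs \<noteq> []" "set xs \<subseteq> Mgrid \<times> sq_carrier X"
    "hd xs \<in> tclass Mgrid X a1" "last xs \<in> tclass Mgrid X a2" by blast
  have sub: "tclass Mgrid X a \<subseteq> tclass Ngrid X a" for a
    unfolding tclass_def using tens_rel_mono[OF Mgrid_sub, of X] by blast
  have "set xs \<subseteq> Ngrid \<times> sq_carrier X" using h(2) Mgrid_sub by blast
  then show "\<exists>a\<in>{chain_cost Ngrid X xs |xs. xs \<noteq> [] \<and> set xs \<subseteq> Ngrid \<times> sq_carrier X \<and>
      hd xs \<in> tclass Ngrid X a1 \<and> last xs \<in> tclass Ngrid X a2}. a \<le> b"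
    using h sub chain_cost_mono[OF X h(2)] b by blast
qed

theorem mainTheorem17:
  fixes X :: "'a sqms" and Y :: "'b sqms" and f :: "'a \<Rightarrow> 'b"
  assumes "is_sqms X" and "is_sqms Y" and "sqms_mor X Y f"
  shows "(\<forall>m\<in>Mgrid. \<forall>x\<in>sq_carrier X. iota X (tclass Mgrid X (m, x)) = tclass Ngrid X (m, x))
       \<and> sqms_mor (tensor Mgrid X) (tensor Ngrid X) (iota X)
       \<and> (\<forall>c\<in>sq_carrier (tensor Mgrid X).
            tmap Ngrid X Y f (iota X c) = iota Y (tmap Mgrid X Y f c))"
proof (intro conjI)
  note X = assms(1) and Y = assms(2) and f = assms(3)
  show P1: "\<forall>m\<in>Mgrid. \<forall>x\<in>sq_carrier X. iota X (tclass Mgrid X (m, x)) = tclass Ngrid X (m, x)"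
  proof (intro ballI)
    fix m x assume "m \<in> Mgrid" "x \<in> sq_carrier X"
    then show "iota X (tclass Mgrid X (m, x)) = tclass Ngrid X (m, x)" by (rule iota_class)
  qed
  show "sqms_mor (tensor Mgrid X) (tensor Ngrid X) (iota X)"
    unfolding sqms_mor_def
  proof (intro conjI ballI subsetI)
    fix y assume "y \<in> iota X ` sq_carrier (tensor Mgrid X)"
    then obtain c where c: "c \<in> sq_carrier (tensor Mgrid X)" "y = iota X c" by blast
    obtain a where a: "a \<in> Mgrid \<times> sq_carrier X" "c = tclass Mgrid X a" using c(1) by (rule carrier_tensor)
    have "y = tclass Ngrid X a" unfolding c(2) a(2) by (rule iota_class'[OF a(1)])
    moreover have "a \<in> Ngrid \<times> sq_carrier X" using a Mgrid_sub by blast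
    ultimately show "y \<in> sq_carrier (tensor Ngrid X)"
      unfolding tensor_def tclass_def by (auto intro: quotientI)
  next
    fix c1 c2 assume c: "c1 \<in> sq_carrier (tensor Mgrid X)" "c2 \<in> sq_carrier (tensor Mgrid X)"
    obtain a1 where a1: "a1 \<in> Mgrid \<times> sq_carrier X" "c1 = tclass Mgrid X a1" using c(1) by (rule carrier_tensor)
    obtain a2 where a2: "a2 \<in> Mgrid \<times> sq_carrier X" "c2 = tclass Mgrid X a2" using c(2) by (rule carrier_tensor)
    have "iota X c1 = tclass Ngrid X a1" "iota X c2 = tclass Ngrid X a2"
      unfolding a1(2) a2(2) by (rule iota_class'[OF a1(1)], rule iota_class'[OF a2(1)])
    then show "sq_dist (tensor Ngrid X) (iota X c1) (iota X c2) \<le> sq_dist (tensor Mgrid X) c1 c2"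
      using short[OF X a1(1) a2(1)] a1 a2 unfolding tensor_def by simp
  next
    fix p assume p: "p \<in> M0"
    obtain m where m: "m \<in> Ngrid" "in_cell m p" using cell_ex[OF p] by blast
    have mM: "m \<in> Mgrid" using cell_facts(1)[OF p m] .
    have q: "(3 * fst p - of_int (fst m), 3 * snd p - of_int (snd m)) \<in> M0" using cell_facts(2)[OF p m] .
    then have qc: "sq_map X (3 * fst p - of_int (fst m), 3 * snd p - of_int (snd m)) \<in> sq_carrier X"
      using map_in[OF X] by blast
    have "iota X (sq_map (tensor Mgrid X) p)
        = iota X (tclass Mgrid X (m, sq_map X (3 * fst p - of_int (fst m), 3 * snd p - of_int (snd m))))"
      unfolding tensor_def using tS_char[OF X Mgrid_sub p mM m(2)] by simp
    also have "\<dots> = tclass Ngrid X (m, sq_map X (3 * fst p - of_int (fst m), 3 * snd p - of_int (snd m)))"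
      using iota_class[OF mM qc] .
    also have "\<dots> = sq_map (tensor Ngrid X) p"
      unfolding tensor_def using tS_char[OF X subset_refl p m] by simp
    finally show "iota X (sq_map (tensor Mgrid X) p) = sq_map (tensor Ngrid X) p" .
  qed
  show "\<forall>c\<in>sq_carrier (tensor Mgrid X). tmap Ngrid X Y f (iota X c) = iota Y (tmap Mgrid X Y f c)"
  proof
    fix c assume c: "c \<in> sq_carrier (tensor Mgrid X)"
    obtain a where a: "a \<in> Mgrid \<times> sq_carrier X" "c = tclass Mgrid X a" using c by (rule carrier_tensor)
    have aN: "a \<in> Ngrid \<times> sq_carrier X" using a Mgrid_sub by blast
    have fa: "f (snd a) \<in> sq_carrier Y" using f a unfolding sqms_mor_def by auto
    have "tmap Ngrid X Y f (iota X c) = tmap Ngrid X Y f (tclass Ngrid X a)"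
      unfolding a(2) iota_class'[OF a(1)] ..
    also have "\<dots> = tclass Ngrid Y (fst a, f (snd a))" using tmap_class[OF X Y f aN] .
    also have "\<dots> = iota Y (tclass Mgrid Y (fst a, f (snd a)))"
      using iota_class[of "fst a" "f (snd a)" Y] a fa by (simp add: mem_Times_iff)
    also have "\<dots> = iota Y (tmap Mgrid X Y f c)" using tmap_class[OF X Y f a(1)] a by simp
    finally show "tmap Ngrid X Y f (iota X c) = iota Y (tmap Mgrid X Y f c)" .
  qed
qed

end
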